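(* Let $\Omega$ be a metrizable compact space and $c$ a capacity on $\mathcal{L}$. Then the Banach space $L^1(c)$ is separable and the unit ball of $L^1(c)^*$ is metrizable compact for the weak* topology $\sigma(L^1(c)^*,L^1(c))$.
   Context: $\mathcal{L}\subset\mathcal{C}_b(\Omega)$ is a linear subspace which is a vector lattice, contains the constants and generates the topology. A capacity on $\mathcal{L}$ is a seminorm $c$ with $c(f)\le c(g)$ whenever $|f|\le|g|$ and $\inf_n c(f_n)=0$ for $f_n\in\mathcal{L}$ decreasing to $0$; it is extended to all functions by $c(f)=\sup\{c(\varphi):\varphi\in\mathcal{L},0\le\varphi\le f\}$ for $f\ge0$ l.s.c. and $c(g)=\inf\{c(f):f\text{ l.s.c.},f\ge|g|\}$. $L^1(c)$ is the Banach space obtained as the quotient by $c$-null elements of the $c$-closure of $\mathcal{L}$ in $\{g:c(g)<\infty\}$ (it contains $\mathcal{C}_b(\Omega)$). *)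

theory Defs
  imports "HOL-Analysis.Analysis"
begin

definition Cb :: "('a::topological_space \<Rightarrow> real) set" where
  "Cb = {f. continuous_on UNIV f \<and> bounded (range f)}"

definition admissible_lattice :: "('a::topological_space \<Rightarrow> real) set \<Rightarrow> bool" where
  "admissible_lattice L \<longleftrightarrow>
     L \<subseteq> Cb \<and>
     (\<forall>f\<in>L. \<forall>g\<in>L. (\<lambda>x. f x + g x) \<in> L) \<and>
     (\<forall>f\<in>L. \<forall>r::real. (\<lambda>x. r * f x) \<in> L) \<and>
     (\<forall>f\<in>L. \<forall>g\<in>L. (\<lambda>x. max (f x) (g x)) \<in> L \<and> (\<lambda>x. min (f x) (g x)) \<in> L) \<and>
     (\<forall>r::real. (\<lambda>_. r) \<in> L) \<and>
     (\<forall>S. open S \<longleftrightarrow> generate_topology {f -` U | f U. f \<in> L \<and> open U} S)"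

definition capacity :: "('a \<Rightarrow> real) set \<Rightarrow> (('a \<Rightarrow> real) \<Rightarrow> real) \<Rightarrow> bool" where
  "capacity L c \<longleftrightarrow>
     (\<forall>f\<in>L. \<forall>g\<in>L. c (\<lambda>x. f x + g x) \<le> c f + c g) \<and>
     (\<forall>f\<in>L. \<forall>r. c (\<lambda>x. r * f x) = \<bar>r\<bar> * c f) \<and>
     (\<forall>f\<in>L. \<forall>g\<in>L. (\<forall>x. \<bar>f x\<bar> \<le> \<bar>g x\<bar>) \<longrightarrow> c f \<le> c g) \<and>
     (\<forall>F. (\<forall>n. F n \<in> L) \<and> (\<forall>n x. F (Suc n) x \<le> F n x) \<and> (\<forall>x. (\<lambda>n. F n x) \<longlonglongrightarrow> 0)
          \<longrightarrow> (INF n. c (F n)) = 0)"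

definition lsc :: "('a::topological_space \<Rightarrow> ennreal) \<Rightarrow> bool" where
  "lsc f \<longleftrightarrow> (\<forall>t. open {x. t < f x})"

definition cap_lsc :: "('a \<Rightarrow> real) set \<Rightarrow> (('a \<Rightarrow> real) \<Rightarrow> real) \<Rightarrow> ('a \<Rightarrow> ennreal) \<Rightarrow> ennreal" where
  "cap_lsc L c f = (SUP \<phi>\<in>{\<phi>\<in>L. \<forall>x. 0 \<le> \<phi> x \<and> ennreal (\<phi> x) \<le> f x}. ennreal (c \<phi>))"

definition cap_ext :: "('a::topological_space \<Rightarrow> real) set \<Rightarrow> (('a \<Rightarrow> real) \<Rightarrow> real) \<Rightarrow> ('a \<Rightarrow> real) \<Rightarrow> ennreal" where
  "cap_ext L c g = (INF f\<in>{f. lsc f \<and> (\<forall>x. ennreal \<bar>g x\<bar> \<le> f x)}. cap_lsc L c f)"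

text \<open>The c-closure of L inside {g. c(g) < \<infinity>}; L^1(c) is its quotient by c-null
  functions, with norm induced by c.\<close>
definition L1_space :: "('a::topological_space \<Rightarrow> real) set \<Rightarrow> (('a \<Rightarrow> real) \<Rightarrow> real) \<Rightarrow> ('a \<Rightarrow> real) set" where
  "L1_space L c = {g. cap_ext L c g < \<infinity> \<and>
      (\<forall>e>0. \<exists>\<phi>\<in>L. cap_ext L c (\<lambda>x. g x - \<phi> x) < ennreal e)}"

text \<open>Unit ball of the dual L^1(c)^*: linear functionals on L1_space of norm \<le> 1
  (they automatically vanish on null functions, hence descend to the quotient),
  represented as extensional functions on L1_space.\<close>
definition dual_ball :: "('a::topological_space \<Rightarrow> real) set \<Rightarrow> (('a \<Rightarrow> real) \<Rightarrow> real) \<Rightarrow> (('a \<Rightarrow> real) \<Rightarrow> real) set" where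
  "dual_ball L c = {u. u \<in> extensional (L1_space L c) \<and>
      (\<forall>g\<in>L1_space L c. \<forall>h\<in>L1_space L c. u (\<lambda>x. g x + h x) = u g + u h) \<and>
      (\<forall>g\<in>L1_space L c. \<forall>r. u (\<lambda>x. r * g x) = r * u g) \<and>
      (\<forall>g\<in>L1_space L c. ennreal \<bar>u g\<bar> \<le> cap_ext L c g)}"

text \<open>Weak* topology on the dual unit ball: topology of pointwise convergence on L1_space.\<close>
definition weak_star_ball :: "('a::topological_space \<Rightarrow> real) set \<Rightarrow> (('a \<Rightarrow> real) \<Rightarrow> real) \<Rightarrow> (('a \<Rightarrow> real) \<Rightarrow> real) topology" where
  "weak_star_ball L c = subtopology (product_topology (\<lambda>_. euclideanreal) (L1_space L c)) (dual_ball L c)"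

end

theory Submission
  imports Defs
begin


lemma ctbl_base:
  assumes cpt: "compact (UNIV::'a::topological_space set)"
    and met: "metrizable_space (euclidean :: 'a topology)"
  shows "\<exists>B::'a set set. countable B \<and> (\<forall>U\<in>B. open U) \<and> (\<forall>U x. open U \<longrightarrow> x \<in> U \<longrightarrow> (\<exists>V\<in>B. x \<in> V \<and> V \<subseteq> U))"
proof -
  obtain M d where md: "Metric_space M d" and X: "(euclidean::'a topology) = Metric_space.mtopology M d"
    using met unfolding metrizable_space_def by blast
  interpret Metric_space M d by (rule md)
  have "M = topspace mtopology" by simp
  also have "\<dots> = topspace (euclidean::'a topology)" by (simp only: X)
  finally have MU: "M = UNIV" by simp
  have xM: "x \<in> M" for x using MU by blast
  have op: "open U \<longleftrightarrow> openin mtopology U" for U by (subst X[symmetric]) (rule open_openin)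
  have "\<forall>n. \<exists>T. T \<subseteq> (\<lambda>p. mball p (1 / Suc n)) ` UNIV \<and> finite T \<and> UNIV \<subseteq> \<Union>T"
  proof
    fix n
    show "\<exists>T. T \<subseteq> (\<lambda>p. mball p (1 / Suc n)) ` UNIV \<and> finite T \<and> UNIV \<subseteq> \<Union>T"
  proof (rule compactE[OF cpt])
    have "x \<in> mball x (1 / Suc n)" for x using xM by simp
    then show "UNIV \<subseteq> \<Union> ((\<lambda>p. mball p (1 / Suc n)) ` UNIV)" by blast
    show "B \<in> (\<lambda>p. mball p (1 / Suc n)) ` UNIV \<Longrightarrow> open B" for B using op by auto
  qed blast
  qed
  from choice[OF this] obtain T where T: "\<And>n. T n \<subseteq> (\<lambda>p. mball p (1 / Suc n)) ` UNIV \<and> finite (T n) \<and> UNIV \<subseteq> \<Union>(T n)"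
    by blast
  define B where "B = (\<Union>n. T n)"
  have cB: "countable B" unfolding B_def by (rule countable_UN) (use T countable_finite in auto)
  have oB: "\<forall>U\<in>B. open U"
  proof
    fix U assume U: "U \<in> B"
    have "\<exists>n. U \<in> T n" using U unfolding B_def by simp
    then obtain n where "U \<in> T n" by (elim exE)
    then obtain p where "U = mball p (1 / Suc n)" using T[of n] by blast
    then show "open U" using op[of U] openin_mball[of p "1 / Suc n"] by simp
  qed
  have base: "\<forall>U x. open U \<longrightarrow> x \<in> U \<longrightarrow> (\<exists>V\<in>B. x \<in> V \<and> V \<subseteq> U)"
  proof (intro allI impI)
    fix U :: "'a set" and x :: 'a assume Uo: "open U" and xU: "x \<in> U"
    have oU: "openin mtopology U" using Uo op[of U] by simp
    then have "U \<subseteq> M \<and> (\<forall>x. x \<in> U \<longrightarrow> (\<exists>r>0. mball x r \<subseteq> U))" by (rule iffD1[OF openin_mtopology])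
    then have "\<exists>r>0. mball x r \<subseteq> U" using xU by simp
    then obtain r where r: "r > 0" "mball x r \<subseteq> U" by auto
    obtain n where n: "2 / Suc n < r"
    proof -
      obtain n where "2 / r < real n" using reals_Archimedean2 by blast
      then have "2 < real n * r" using r(1) by (simp add: divide_less_eq)
      then have "2 < real (Suc n) * r" using r(1) by (simp add: algebra_simps)
      then have "2 / Suc n < r" by (simp add: divide_less_eq mult.commute)
      then show ?thesis using that by blast
    qed
    have Tn: "T n \<subseteq> (\<lambda>p. mball p (1 / Suc n)) ` UNIV" "UNIV \<subseteq> \<Union>(T n)" using T[of n] by simp_all
    have "x \<in> \<Union>(T n)" using Tn(2) by auto
    then obtain V where V: "V \<in> T n" "x \<in> V" by auto
    have "V \<in> (\<lambda>p. mball p (1 / Suc n)) ` UNIV" using Tn(1) V(1) by auto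
    then obtain p where p: "V = mball p (1 / Suc n)" by auto
    have "V \<subseteq> mball x r"
    proof
      fix y assume "y \<in> V"
      then have "d p y < 1 / Suc n" "d p x < 1 / Suc n" using p V xM by auto
      then have "d x y < 2 / Suc n" using triangle[of x p y] commute[of x p] xM by simp
      then show "y \<in> mball x r" using n xM by simp
    qed
    moreover have "V \<in> B" unfolding B_def using V(1) by auto
    ultimately show "\<exists>V\<in>B. x \<in> V \<and> V \<subseteq> U" using V(2) r(2) by auto
  qed
  show ?thesis by (rule exI[of _ B]) (use cB oB base in blast)
qed



lemma lsc_const: "lsc (\<lambda>_. a)"
  unfolding lsc_def by auto

lemma lsc_plus:
  assumes "lsc f"
  shows "lsc (\<lambda>x. f x + ennreal M)"
  unfolding lsc_def
proof
  fix t :: ennreal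
  show "open {x. t < f x + ennreal M}"
  proof (cases "t < ennreal M")
    case True
    have "t < f x + ennreal M" for x
      using order.strict_trans2[OF True add_increasing[OF zero_le order.refl]] .
    then have "{x. t < f x + ennreal M} = UNIV" by auto
    then show ?thesis by simp
  next
    case False
    then have "{x. t < f x + ennreal M} = {x. t - ennreal M < f x}"
      by (simp add: minus_less_iff_ennreal)
    then show ?thesis using assms unfolding lsc_def by simp
  qed
qed


locale capsetup =
  fixes L :: "('a::topological_space \<Rightarrow> real) set" and c
  assumes adm: "admissible_lattice L" and cap: "capacity L c"
begin

lemma L_add: "f \<in> L \<Longrightarrow> g \<in> L \<Longrightarrow> (\<lambda>x. f x + g x) \<in> L"
  using adm unfolding admissible_lattice_def by blast
lemma L_scale: "f \<in> L \<Longrightarrow> (\<lambda>x. r * f x) \<in> L"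
  using adm unfolding admissible_lattice_def by blast
lemma L_max: "f \<in> L \<Longrightarrow> g \<in> L \<Longrightarrow> (\<lambda>x. max (f x) (g x)) \<in> L"
  using adm unfolding admissible_lattice_def by blast
lemma L_min: "f \<in> L \<Longrightarrow> g \<in> L \<Longrightarrow> (\<lambda>x. min (f x) (g x)) \<in> L"
  using adm unfolding admissible_lattice_def by blast
lemma L_const: "(\<lambda>_. r) \<in> L"
  using adm unfolding admissible_lattice_def by blast
lemma L_Cb: "f \<in> L \<Longrightarrow> f \<in> Cb"
  using adm unfolding admissible_lattice_def by blast
lemma c_add: "f \<in> L \<Longrightarrow> g \<in> L \<Longrightarrow> c (\<lambda>x. f x + g x) \<le> c f + c g"
  using cap unfolding capacity_def by blast
lemma c_scale: "f \<in> L \<Longrightarrow> c (\<lambda>x. r * f x) = \<bar>r\<bar> * c f"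
  using cap unfolding capacity_def by blast
lemma c_mono: "f \<in> L \<Longrightarrow> g \<in> L \<Longrightarrow> (\<And>x. \<bar>f x\<bar> \<le> \<bar>g x\<bar>) \<Longrightarrow> c f \<le> c g"
  using cap unfolding capacity_def by blast

lemma c_nonneg: "f \<in> L \<Longrightarrow> 0 \<le> c f"
proof -
  assume f: "f \<in> L"
  have m: "(\<lambda>x. -1 * f x) \<in> L" using f L_scale by blast
  have "c (\<lambda>x. f x + (\<lambda>x. -1 * f x) x) \<le> c f + c (\<lambda>x. -1 * f x)"
    using c_add[OF f m] .
  moreover have "c (\<lambda>x. -1 * f x) = c f" using c_scale[OF f, of "-1"] by simp
  moreover have "c (\<lambda>x. f x + (\<lambda>x. -1 * f x) x) = c (\<lambda>x. 0 * f x)" by simp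
  moreover have "c (\<lambda>x. 0 * f x) = 0" using c_scale[OF f, of 0] by simp
  ultimately show ?thesis by linarith
qed

lemma c_const: "c (\<lambda>_. M) = \<bar>M\<bar> * c (\<lambda>_. 1)"
  using c_scale[OF L_const[of 1], of M] by simp

lemma c1_nonneg: "0 \<le> c (\<lambda>_. 1)"
  using c_nonneg[OF L_const] .

lemma cap_lsc_const:
  assumes M: "0 \<le> M"
  shows "cap_lsc L c (\<lambda>_. ennreal M) \<le> ennreal (M * c (\<lambda>_. 1))"
  unfolding cap_lsc_def
proof (rule SUP_least)
  fix \<phi> assume "\<phi> \<in> {\<phi> \<in> L. \<forall>x. 0 \<le> \<phi> x \<and> ennreal (\<phi> x) \<le> ennreal M}"
  then have p: "\<phi> \<in> L" and b0: "\<And>x. 0 \<le> \<phi> x" and b1: "\<And>x. ennreal (\<phi> x) \<le> ennreal M"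
    by auto
  have b: "\<bar>\<phi> x\<bar> \<le> \<bar>M\<bar>" for x
    using b0[of x] b1[of x] M by (simp add: ennreal_le_iff)
  have "c \<phi> \<le> c (\<lambda>_. M)"
    by (rule c_mono[OF p L_const]) (rule b)
  also have "\<dots> = M * c (\<lambda>_. 1)" using c_const[of M] M by simp
  finally show "ennreal (c \<phi>) \<le> ennreal (M * c (\<lambda>_. 1))" by (rule ennreal_leI)
qed

lemma cap_ext_bound:
  assumes b: "\<And>x. \<bar>g x\<bar> \<le> M"
  shows "cap_ext L c g \<le> ennreal (M * c (\<lambda>_. 1))"
proof -
  have M: "0 \<le> M" using b[of undefined] by linarith
  have "cap_ext L c g \<le> cap_lsc L c (\<lambda>_. ennreal M)"
    unfolding cap_ext_def
    by (rule INF_lower) (use b in \<open>auto simp: lsc_const ennreal_leI\<close>)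
  also have "\<dots> \<le> ennreal (M * c (\<lambda>_. 1))" by (rule cap_lsc_const[OF M])
  finally show ?thesis .
qed


lemma cap_lsc_plus:
  assumes M: "0 \<le> M"
  shows "cap_lsc L c (\<lambda>x. f x + ennreal M) \<le> cap_lsc L c f + ennreal (M * c (\<lambda>_. 1))"
  unfolding cap_lsc_def[of L c "\<lambda>x. f x + ennreal M"]
proof (rule SUP_least)
  fix \<phi> assume "\<phi> \<in> {\<phi> \<in> L. \<forall>x. 0 \<le> \<phi> x \<and> ennreal (\<phi> x) \<le> f x + ennreal M}"
  then have p: "\<phi> \<in> L" and b: "\<And>x. 0 \<le> \<phi> x" and b2: "\<And>x. ennreal (\<phi> x) \<le> f x + ennreal M"
    by auto
  define \<phi>1 where "\<phi>1 = (\<lambda>x. min (\<phi> x) M)"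
  define \<phi>2 where "\<phi>2 = (\<lambda>x. max (\<phi> x - M) 0)"
  have p1: "\<phi>1 \<in> L" unfolding \<phi>1_def using L_min[OF p L_const] by simp
  have p2: "\<phi>2 \<in> L" unfolding \<phi>2_def
    using L_max[OF L_add[OF p L_const[of "-M"]] L_const[of 0]] by simp
  have sum: "\<phi> = (\<lambda>x. \<phi>1 x + \<phi>2 x)" unfolding \<phi>1_def \<phi>2_def by (auto simp: fun_eq_iff)
  have "c \<phi> \<le> c \<phi>1 + c \<phi>2" using c_add[OF p1 p2] by (subst sum) simp
  moreover have "c \<phi>1 \<le> M * c (\<lambda>_. 1)"
  proof -
    have "c \<phi>1 \<le> c (\<lambda>_. M)"
      by (rule c_mono[OF p1 L_const]) (use b M in \<open>auto simp: \<phi>1_def\<close>)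
    then show ?thesis using c_const[of M] M by simp
  qed
  moreover have "ennreal (c \<phi>2) \<le> cap_lsc L c f"
    unfolding cap_lsc_def
  proof (rule SUP_upper)
    have "ennreal (\<phi>2 x) \<le> f x" for x
    proof (cases "\<phi> x \<le> M")
      case True then show ?thesis unfolding \<phi>2_def by simp
    next
      case False
      then have "ennreal (\<phi> x - M) = ennreal (\<phi> x) - ennreal M" using M by (simp add: ennreal_minus)
      also have "\<dots> \<le> f x" using b2[of x] by (simp add: ennreal_minus_le_iff add.commute)
      finally show ?thesis unfolding \<phi>2_def using False by simp
    qed
    then show "\<phi>2 \<in> {\<phi> \<in> L. \<forall>x. 0 \<le> \<phi> x \<and> ennreal (\<phi> x) \<le> f x}"
      using p2 unfolding \<phi>2_def by auto
  qed
  ultimately have "ennreal (c \<phi>) \<le> ennreal (M * c (\<lambda>_. 1)) + cap_lsc L c f"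
  proof -
    assume a1: "c \<phi> \<le> c \<phi>1 + c \<phi>2" and a2: "c \<phi>1 \<le> M * c (\<lambda>_. 1)"
      and a3: "ennreal (c \<phi>2) \<le> cap_lsc L c f"
    have "ennreal (c \<phi>) \<le> ennreal (c \<phi>1 + c \<phi>2)" using a1 by (rule ennreal_leI)
    also have "\<dots> = ennreal (c \<phi>1) + ennreal (c \<phi>2)"
      using c_nonneg[OF p1] c_nonneg[OF p2] by (rule ennreal_plus)
    also have "\<dots> \<le> ennreal (M * c (\<lambda>_. 1)) + cap_lsc L c f"
      using ennreal_leI[OF a2] a3 by (rule add_mono)
    finally show ?thesis .
  qed
  then show "ennreal (c \<phi>) \<le> cap_lsc L c f + ennreal (M * c (\<lambda>_. 1))"
    by (simp add: add.commute)
qed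

lemma cap_ext_plus:
  assumes M: "0 \<le> M" and f: "lsc f" "\<And>x. ennreal \<bar>g x\<bar> \<le> f x"
    and h: "\<And>x. \<bar>h x\<bar> \<le> \<bar>g x\<bar> + M"
  shows "cap_ext L c h \<le> cap_lsc L c f + ennreal (M * c (\<lambda>_. 1))"
proof -
  have "cap_ext L c h \<le> cap_lsc L c (\<lambda>x. f x + ennreal M)"
    unfolding cap_ext_def
  proof (rule INF_lower, safe)
    show "lsc (\<lambda>x. f x + ennreal M)" using lsc_plus f by blast
    fix x
    have "ennreal \<bar>h x\<bar> \<le> ennreal (\<bar>g x\<bar> + M)" using h ennreal_leI by blast
    also have "\<dots> = ennreal \<bar>g x\<bar> + ennreal M" using M by (simp add: ennreal_plus)
    also have "\<dots> \<le> f x + ennreal M" using f(2) by (simp add: add_right_mono)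
    finally show "ennreal \<bar>h x\<bar> \<le> f x + ennreal M" .
  qed
  also have "\<dots> \<le> cap_lsc L c f + ennreal (M * c (\<lambda>_. 1))" by (rule cap_lsc_plus[OF M])
  finally show ?thesis .
qed

end


context capsetup
begin

lemma L_sep:
  assumes cpt: "compact (UNIV::'a set)" and met: "metrizable_space (euclidean::'a topology)"
  shows "\<exists>D0. countable D0 \<and> D0 \<subseteq> L \<and> (\<forall>\<phi>\<in>L. \<forall>k::nat. \<exists>\<psi>\<in>D0. \<forall>x. \<bar>\<phi> x - \<psi> x\<bar> \<le> 2 / Suc k)"
proof -
  obtain B :: "'a set set" where cB: "countable B" and oB: "\<forall>U\<in>B. open U"
    and base: "\<forall>U x. open U \<longrightarrow> x \<in> U \<longrightarrow> (\<exists>V\<in>B. x \<in> V \<and> V \<subseteq> U)"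
    using ctbl_base[OF cpt met] by auto
  define Idx where "Idx = {F. finite F \<and> F \<subseteq> B \<times> (\<rat>::real set)} \<times> (UNIV::nat set)"
  define T where "T F k = {\<psi>\<in>L. (\<forall>x. \<exists>p\<in>F. x \<in> fst p) \<and> (\<forall>p\<in>F. \<forall>y\<in>fst p. \<bar>\<psi> y - snd p\<bar> < 1 / Suc k)}"
    for F :: "('a set \<times> real) set" and k :: nat
  define D0 where "D0 = (\<lambda>i. SOME \<psi>. \<psi> \<in> T (fst i) (snd i)) ` {i\<in>Idx. T (fst i) (snd i) \<noteq> {}}"
  have cI: "countable Idx" unfolding Idx_def
    by (intro countable_SIGMA countable_Collect_finite_subset cB countable_rat) auto
  have cD: "countable D0" unfolding D0_def
    by (rule countable_image) (rule countable_subset[OF _ cI], auto)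
  have someT: "(SOME \<psi>. \<psi> \<in> T F k) \<in> T F k" if "T F k \<noteq> {}" for F k
    using that by (simp add: some_in_eq)
  have DL: "D0 \<subseteq> L"
  proof
    fix \<psi> assume "\<psi> \<in> D0"
    then obtain i where i: "T (fst i) (snd i) \<noteq> {}" "\<psi> = (SOME \<psi>. \<psi> \<in> T (fst i) (snd i))"
      unfolding D0_def by auto
    then have "\<psi> \<in> T (fst i) (snd i)" using someT by simp
    then show "\<psi> \<in> L" unfolding T_def by simp
  qed
  have dense: "\<exists>\<psi>\<in>D0. \<forall>x. \<bar>\<phi> x - \<psi> x\<bar> \<le> 2 / Suc k" if \<phi>: "\<phi> \<in> L" for \<phi> k
  proof -
    define e where "e = 1 / real (Suc k)"
    have e: "e > 0" unfolding e_def by simp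
    have cont: "continuous_on UNIV \<phi>" using L_Cb[OF \<phi>] unfolding Cb_def by simp
    define C where "C = {U\<in>B. \<exists>r\<in>\<rat>. \<forall>y\<in>U. \<bar>\<phi> y - r\<bar> < e}"
    have cover: "\<exists>U\<in>C. x \<in> U" for x
    proof -
      define W where "W = \<phi> -` {\<phi> x - e/2 <..< \<phi> x + e/2}"
      have "open (\<phi> -` {\<phi> x - e/2 <..< \<phi> x + e/2} \<inter> UNIV)"
        using cont continuous_on_open_vimage[OF open_UNIV, of \<phi>] by simp
      then have oW: "open W" unfolding W_def by simp
      have xW: "x \<in> W" unfolding W_def using e by simp
      have "\<exists>V\<in>B. x \<in> V \<and> V \<subseteq> W" using base oW xW by simp
      then obtain V where V: "V \<in> B" "x \<in> V" "V \<subseteq> W" by auto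
      obtain r where r: "r \<in> \<rat>" "\<phi> x - e/2 < r" "r < \<phi> x + e/2"
        using Rats_dense_in_real[of "\<phi> x - e/2" "\<phi> x + e/2"] e by auto
      have "\<forall>y\<in>V. \<bar>\<phi> y - r\<bar> < e"
      proof
        fix y assume "y \<in> V"
        then have "y \<in> W" using V(3) by auto
        then have "\<phi> x - e/2 < \<phi> y" "\<phi> y < \<phi> x + e/2" unfolding W_def by auto
        then show "\<bar>\<phi> y - r\<bar> < e" using r by linarith
      qed
      then have "V \<in> C" unfolding C_def using V(1) r(1) by auto
      then show ?thesis using V(2) by auto
    qed
    obtain C' where C': "C' \<subseteq> C" "finite C'" "UNIV \<subseteq> \<Union>C'"
    proof (rule compactE[OF cpt])
      show "UNIV \<subseteq> \<Union>C" using cover by auto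
      show "open U" if "U \<in> C" for U using that oB unfolding C_def by auto
    qed auto
    have "\<forall>U\<in>C'. \<exists>r. r \<in> \<rat> \<and> (\<forall>y\<in>U. \<bar>\<phi> y - r\<bar> < e)" using C'(1) unfolding C_def by auto
    then obtain rr where rr: "\<And>U. U \<in> C' \<Longrightarrow> rr U \<in> \<rat> \<and> (\<forall>y\<in>U. \<bar>\<phi> y - rr U\<bar> < e)"
      by metis
    define F where "F = (\<lambda>U. (U, rr U)) ` C'"
    have FI: "(F, k) \<in> Idx" unfolding Idx_def F_def using C' rr unfolding C_def by auto
    have cov: "\<forall>x. \<exists>p\<in>F. x \<in> fst p"
    proof
      fix x
      obtain U where "U \<in> C'" "x \<in> U" using C'(3) by auto
      then show "\<exists>p\<in>F. x \<in> fst p" unfolding F_def by auto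
    qed
    have "\<phi> \<in> T F k" unfolding T_def using \<phi> cov rr unfolding F_def e_def by auto
    then have ne: "T F k \<noteq> {}" by auto
    define \<psi> where "\<psi> = (SOME \<psi>. \<psi> \<in> T F k)"
    have \<psi>T: "\<psi> \<in> T F k" unfolding \<psi>_def using someT[OF ne] .
    have "\<psi> \<in> D0" unfolding D0_def \<psi>_def using FI ne by force
    moreover have "\<bar>\<phi> x - \<psi> x\<bar> \<le> 2 / Suc k" for x
    proof -
      have "\<exists>p\<in>F. x \<in> fst p" using cov by simp
      then obtain p where p: "p \<in> F" "x \<in> fst p" by (elim bexE)
      have "\<bar>\<phi> x - snd p\<bar> < e" using `\<phi> \<in> T F k` p unfolding T_def e_def by auto
      moreover have "\<bar>\<psi> x - snd p\<bar> < e" using \<psi>T p unfolding T_def e_def by auto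
      ultimately show ?thesis unfolding e_def by simp
    qed
    ultimately show ?thesis by auto
  qed
  show ?thesis using cD DL dense by auto
qed

end


context capsetup
begin

lemma L_bdd: "\<phi> \<in> L \<Longrightarrow> \<exists>M. \<forall>x. \<bar>\<phi> x\<bar> \<le> M"
proof -
  assume "\<phi> \<in> L"
  then have "bounded (range \<phi>)" using L_Cb unfolding Cb_def by simp
  then obtain a where "\<forall>y\<in>range \<phi>. norm y \<le> a" unfolding bounded_iff by auto
  then show ?thesis by auto
qed

lemma L_diff: "\<phi> \<in> L \<Longrightarrow> \<psi> \<in> L \<Longrightarrow> (\<lambda>x. \<phi> x - \<psi> x) \<in> L"
  using L_add[of \<phi> "\<lambda>x. -1 * \<psi> x"] L_scale[of \<psi> "-1"] by simp

lemma L_in_L1: "\<phi> \<in> L \<Longrightarrow> \<phi> \<in> L1_space L c"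
proof -
  assume p: "\<phi> \<in> L"
  obtain M where M: "\<And>x. \<bar>\<phi> x\<bar> \<le> M" using L_bdd[OF p] by auto
  have "cap_ext L c \<phi> \<le> ennreal (M * c (\<lambda>_. 1))" by (rule cap_ext_bound) (rule M)
  moreover have "ennreal (M * c (\<lambda>_. 1)) < \<infinity>" by simp
  ultimately have fin: "cap_ext L c \<phi> < \<infinity>" by (rule le_less_trans)
  have z: "cap_ext L c (\<lambda>x. \<phi> x - \<phi> x) \<le> ennreal (0 * c (\<lambda>_. 1))"
    by (rule cap_ext_bound) simp
  have "\<exists>\<psi>\<in>L. cap_ext L c (\<lambda>x. \<phi> x - \<psi> x) < ennreal e" if e: "e > 0" for e
  proof (rule bexI[OF _ p])
    have "ennreal (0 * c (\<lambda>_. 1)) < ennreal e" using e by simp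
    with z show "cap_ext L c (\<lambda>x. \<phi> x - \<phi> x) < ennreal e" by (rule le_less_trans)
  qed
  then show ?thesis unfolding L1_space_def using fin by simp
qed

lemma approx:
  assumes a: "cap_ext L c (\<lambda>x. g x - \<phi> x) < a" and d: "\<And>x. \<bar>\<phi> x - \<psi> x\<bar> \<le> \<delta>" and d0: "0 \<le> \<delta>"
  shows "cap_ext L c (\<lambda>x. g x - \<psi> x) < a + ennreal (\<delta> * c (\<lambda>_. 1))"
proof -
  obtain f where f: "lsc f" "\<And>x. ennreal \<bar>g x - \<phi> x\<bar> \<le> f x" "cap_lsc L c f < a"
    using a unfolding cap_ext_def INF_less_iff by auto
  have h: "\<bar>g x - \<psi> x\<bar> \<le> \<bar>g x - \<phi> x\<bar> + \<delta>" for x using d[of x] by linarith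
  have "cap_ext L c (\<lambda>x. g x - \<psi> x) \<le> cap_lsc L c f + ennreal (\<delta> * c (\<lambda>_. 1))"
    by (rule cap_ext_plus[OF d0 f(1) f(2) h])
  also have "\<dots> < a + ennreal (\<delta> * c (\<lambda>_. 1))"
    using f(3) ennreal_add_left_cancel_less[of "ennreal (\<delta> * c (\<lambda>_. 1))" "cap_lsc L c f" a]
    by (simp add: add.commute)
  finally show ?thesis .
qed

lemma L1_diff:
  assumes g: "g \<in> L1_space L c" and d: "d \<in> L"
  shows "(\<lambda>x. g x - d x) \<in> L1_space L c"
proof -
  have g1: "cap_ext L c g < \<infinity>" and g2: "\<And>e. e > 0 \<Longrightarrow> \<exists>\<phi>\<in>L. cap_ext L c (\<lambda>x. g x - \<phi> x) < ennreal e"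
    using g unfolding L1_space_def by auto
  obtain M where M: "\<And>x. \<bar>d x\<bar> \<le> M" using L_bdd[OF d] by auto
  have M0: "0 \<le> M" using M[of undefined] by linarith
  have "cap_ext L c (\<lambda>x. g x - (\<lambda>_. 0) x) < \<infinity>" using g1 by simp
  then have "cap_ext L c (\<lambda>x. g x - d x) < \<infinity> + ennreal (M * c (\<lambda>_. 1))"
    by (rule approx) (use M M0 in auto)
  then have fin: "cap_ext L c (\<lambda>x. g x - d x) < \<infinity>" by simp
  have "\<exists>\<phi>\<in>L. cap_ext L c (\<lambda>x. (g x - d x) - \<phi> x) < ennreal e" if e: "e > 0" for e
  proof -
    obtain \<phi> where p: "\<phi> \<in> L" "cap_ext L c (\<lambda>x. g x - \<phi> x) < ennreal e" using g2[OF e] by auto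
    have "(\<lambda>x. (g x - d x) - (\<lambda>x. \<phi> x - d x) x) = (\<lambda>x. g x - \<phi> x)" by simp
    then show ?thesis using p L_diff[OF p(1) d] by (intro bexI[of _ "\<lambda>x. \<phi> x - d x"]) auto
  qed
  then show ?thesis unfolding L1_space_def using fin by auto
qed

lemma L1_sep:
  assumes cpt: "compact (UNIV::'a set)" and met: "metrizable_space (euclidean::'a topology)"
  shows "\<exists>D. countable D \<and> D \<subseteq> L \<and>
            (\<forall>g\<in>L1_space L c. \<forall>e>0. \<exists>d\<in>D. cap_ext L c (\<lambda>x. g x - d x) < ennreal e)"
proof -
  obtain D0 where D0: "countable D0" "D0 \<subseteq> L" "\<And>\<phi> k. \<phi> \<in> L \<Longrightarrow> \<exists>\<psi>\<in>D0. \<forall>x. \<bar>\<phi> x - \<psi> x\<bar> \<le> 2 / Suc k"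
    using L_sep[OF cpt met] by auto
  have "\<exists>d\<in>D0. cap_ext L c (\<lambda>x. g x - d x) < ennreal e" if g: "g \<in> L1_space L c" and e: "e > 0" for g e
  proof -
    have "e/2 > 0" using e by simp
    moreover have g2: "\<forall>e>0. \<exists>\<phi>\<in>L. cap_ext L c (\<lambda>x. g x - \<phi> x) < ennreal e"
      using g unfolding L1_space_def by simp
    ultimately have "\<exists>\<phi>\<in>L. cap_ext L c (\<lambda>x. g x - \<phi> x) < ennreal (e/2)" by simp
    then obtain \<phi> where p: "\<phi> \<in> L" "cap_ext L c (\<lambda>x. g x - \<phi> x) < ennreal (e/2)"
      by auto
    define c1 where "c1 = c (\<lambda>_. 1)"
    have c1: "0 \<le> c1" unfolding c1_def by (rule c1_nonneg)
    obtain k where k: "4 * c1 / e < real k" using reals_Archimedean2 by blast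
    have "4 * c1 < e * real k" using k e by (simp add: divide_less_eq mult.commute)
    moreover have "e * real k < e * real (Suc k)" using e by simp
    ultimately have "4 * c1 < e * real (Suc k)" by linarith
    then have dk: "2 / real (Suc k) * c1 < e / 2" by (simp add: field_simps)
    obtain \<psi> where s: "\<psi> \<in> D0" "\<forall>x. \<bar>\<phi> x - \<psi> x\<bar> \<le> 2 / Suc k" using D0(3)[OF p(1)] by auto
    have "cap_ext L c (\<lambda>x. g x - \<psi> x) < ennreal (e/2) + ennreal (2 / Suc k * c1)"
      unfolding c1_def by (rule approx[OF p(2)]) (use s in auto)
    also have "\<dots> = ennreal (e/2 + 2 / Suc k * c1)" using e c1 by (simp add: ennreal_plus)
    also have "\<dots> \<le> ennreal e" using dk by (intro ennreal_leI) linarith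
    finally show ?thesis using s(1) by auto
  qed
  then have "countable D0 \<and> D0 \<subseteq> L \<and>
            (\<forall>g\<in>L1_space L c. \<forall>e>0. \<exists>d\<in>D0. cap_ext L c (\<lambda>x. g x - d x) < ennreal e)"
    using D0(1,2) by simp
  then show ?thesis by (rule exI)
qed

end


context capsetup
begin

lemma proj_cont:
  "continuous_map (product_topology (\<lambda>_. euclideanreal) I) euclideanreal (\<lambda>u. u z)"
proof (cases "z \<in> I")
  case True
  then show ?thesis by (rule continuous_map_product_projection)
next
  case False
  have c: "continuous_map (product_topology (\<lambda>_. euclideanreal) I) euclideanreal (\<lambda>u. undefined)"
    by simp
  show ?thesis
  proof (rule continuous_map_eq[OF c])
    fix u assume "u \<in> topspace (product_topology (\<lambda>_. euclideanreal) I)"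
    then have "u \<in> extensional I" by (simp add: PiE_def)
    then show "undefined = u z" using False by (simp add: extensional_def)
  qed
qed

lemma topspace_prod_ext:
  "topspace (product_topology (\<lambda>_. euclideanreal) I) = extensional I"
  by (simp add: PiE_def)

lemma DB_ext: "dual_ball L c \<subseteq> extensional (L1_space L c)"
  unfolding dual_ball_def by auto

lemma DB_add: "u \<in> dual_ball L c \<Longrightarrow> g \<in> L1_space L c \<Longrightarrow> h \<in> L1_space L c \<Longrightarrow> u (\<lambda>x. g x + h x) = u g + u h"
  unfolding dual_ball_def by simp
lemma DB_scale: "u \<in> dual_ball L c \<Longrightarrow> g \<in> L1_space L c \<Longrightarrow> u (\<lambda>x. r * g x) = r * u g"
  unfolding dual_ball_def by simp
lemma DB_bound: "u \<in> dual_ball L c \<Longrightarrow> g \<in> L1_space L c \<Longrightarrow> ennreal \<bar>u g\<bar> \<le> cap_ext L c g"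
  unfolding dual_ball_def by simp

lemma L1_fin: "g \<in> L1_space L c \<Longrightarrow> cap_ext L c g < \<infinity>"
  unfolding L1_space_def by simp

lemma DB_diff:
  assumes u: "u \<in> dual_ball L c" and g: "g \<in> L1_space L c" and d: "d \<in> L"
  shows "u (\<lambda>x. g x - d x) = u g - u d"
proof -
  have h: "(\<lambda>x. -1 * d x) \<in> L1_space L c" by (rule L_in_L1) (rule L_scale[OF d])
  have "u (\<lambda>x. g x + (\<lambda>x. -1 * d x) x) = u g + u (\<lambda>x. -1 * d x)" by (rule DB_add[OF u g h])
  moreover have "u (\<lambda>x. -1 * d x) = -1 * u d" by (rule DB_scale[OF u L_in_L1[OF d]])
  ultimately show ?thesis by simp
qed

lemma DB_real_bound:
  assumes u: "u \<in> dual_ball L c" and g: "g \<in> L1_space L c"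
  shows "\<bar>u g\<bar> \<le> enn2real (cap_ext L c g)"
proof -
  have "ennreal \<bar>u g\<bar> \<le> cap_ext L c g" by (rule DB_bound[OF u g])
  also have "\<dots> = ennreal (enn2real (cap_ext L c g))" using L1_fin[OF g] by (simp add: less_top)
  finally show ?thesis by (simp add: ennreal_le_iff)
qed

lemma DB_closed:
  "closedin (product_topology (\<lambda>_. euclideanreal) (L1_space L c)) (dual_ball L c)"
proof -
  define I where "I = L1_space L c"
  define X where "X = product_topology (\<lambda>_. euclideanreal) I"
  define Bd where "Bd g = enn2real (cap_ext L c g)" for g
  have I0: "I \<noteq> {}" unfolding I_def using L_in_L1[OF L_const[of 0]] by auto
  have tX: "topspace X = extensional I" unfolding X_def by (rule topspace_prod_ext)
  have pc: "continuous_map X euclideanreal (\<lambda>u. u z)" for z unfolding X_def by (rule proj_cont)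
  define E1 where "E1 = (\<Inter>p\<in>I\<times>I. {u \<in> topspace X. u (\<lambda>x. fst p x + snd p x) = u (fst p) + u (snd p)})"
  define E2 where "E2 = (\<Inter>p\<in>I\<times>(UNIV::real set). {u \<in> topspace X. u (\<lambda>x. snd p * fst p x) = snd p * u (fst p)})"
  define E3 where "E3 = (\<Inter>g\<in>I. {u \<in> topspace X. u g \<in> {- Bd g .. Bd g}})"
  have "closedin X E1" unfolding E1_def
  proof (rule closedin_INT)
    show "I \<times> I \<noteq> {}" using I0 by simp
    fix p
    show "closedin X {u \<in> topspace X. u (\<lambda>x. fst p x + snd p x) = u (fst p) + u (snd p)}"
      by (rule closedin_continuous_maps_eq[OF _ pc continuous_map_add[OF pc pc]]) simp
  qed
  moreover have "closedin X E2" unfolding E2_def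
  proof (rule closedin_INT)
    show "I \<times> (UNIV::real set) \<noteq> {}" using I0 by simp
    fix p :: "('a \<Rightarrow> real) \<times> real"
    show "closedin X {u \<in> topspace X. u (\<lambda>x. snd p * fst p x) = snd p * u (fst p)}"
      by (rule closedin_continuous_maps_eq[OF _ pc continuous_map_real_mult_left[OF pc]]) simp
  qed
  moreover have "closedin X E3" unfolding E3_def
  proof (rule closedin_INT)
    show "I \<noteq> {}" by (rule I0)
    fix g
    show "closedin X {u \<in> topspace X. u g \<in> {- Bd g .. Bd g}}"
      by (rule closedin_continuous_map_preimage[OF pc]) (simp add: closed_closedin[symmetric])
  qed
  moreover have "dual_ball L c = E1 \<inter> E2 \<inter> E3"
  proof (rule set_eqI)
    fix u
    show "u \<in> dual_ball L c \<longleftrightarrow> u \<in> E1 \<inter> E2 \<inter> E3"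
    proof
      assume u: "u \<in> dual_ball L c"
      then have ue: "u \<in> topspace X" using DB_ext tX I_def by auto
      have "u \<in> E1" unfolding E1_def using ue DB_add[OF u] I_def by auto
      moreover have "u \<in> E2" unfolding E2_def using ue DB_scale[OF u] I_def by auto
      moreover have "u \<in> E3" unfolding E3_def
      proof (intro INT_I CollectI conjI ue)
        fix g assume "g \<in> I"
        then have "\<bar>u g\<bar> \<le> Bd g" using DB_real_bound[OF u] I_def Bd_def by simp
        then show "u g \<in> {- Bd g .. Bd g}" by (simp add: abs_le_iff)
      qed
      ultimately show "u \<in> E1 \<inter> E2 \<inter> E3" by simp
    next
      assume u: "u \<in> E1 \<inter> E2 \<inter> E3"
      have ue: "u \<in> extensional I" using u tX I0 unfolding E1_def by auto
      have a: "\<forall>g\<in>I. \<forall>h\<in>I. u (\<lambda>x. g x + h x) = u g + u h" using u unfolding E1_def by auto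
      have s: "\<forall>g\<in>I. \<forall>r. u (\<lambda>x. r * g x) = r * u g" using u unfolding E2_def by auto
      have b: "\<forall>g\<in>I. \<bar>u g\<bar> \<le> Bd g" using u unfolding E3_def by (auto simp: abs_le_iff)
      have "ennreal \<bar>u g\<bar> \<le> cap_ext L c g" if g: "g \<in> I" for g
      proof -
        have "ennreal \<bar>u g\<bar> \<le> ennreal (Bd g)" using b g ennreal_leI by blast
        also have "\<dots> = cap_ext L c g" unfolding Bd_def using L1_fin g I_def by (simp add: less_top)
        finally show ?thesis .
      qed
      then show "u \<in> dual_ball L c" unfolding dual_ball_def using ue a s I_def by simp
    qed
  qed
  ultimately show ?thesis unfolding X_def I_def by (simp add: closedin_Int)
qed

end


context capsetup
begin

lemma DB_small:
  assumes u: "u \<in> dual_ball L c" and g: "g \<in> L1_space L c" and lt: "cap_ext L c g < ennreal e"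
  shows "\<bar>u g\<bar> < e"
proof -
  have "ennreal \<bar>u g\<bar> < ennreal e" using DB_bound[OF u g] lt by (rule le_less_trans)
  then show ?thesis by (simp add: ennreal_less_iff)
qed

lemma DB_inj:
  assumes u: "u \<in> dual_ball L c" and v: "v \<in> dual_ball L c" and DL: "D \<subseteq> L"
    and dense: "\<forall>g\<in>L1_space L c. \<forall>e>0. \<exists>d\<in>D. cap_ext L c (\<lambda>x. g x - d x) < ennreal e"
    and agree: "\<And>d. d \<in> D \<Longrightarrow> u d = v d"
  shows "u = v"
proof (rule ext)
  fix g
  show "u g = v g"
  proof (cases "g \<in> L1_space L c")
    case False
    have "u \<in> extensional (L1_space L c)" "v \<in> extensional (L1_space L c)" using DB_ext u v by auto
    then show ?thesis using False by (simp add: extensional_def)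
  next
    case g: True
    have key: "\<bar>u g - v g\<bar> < 2 * e" if e: "e > 0" for e
    proof -
      have "\<exists>d\<in>D. cap_ext L c (\<lambda>x. g x - d x) < ennreal e" using dense g e by simp
      then obtain d where d: "d \<in> D" "cap_ext L c (\<lambda>x. g x - d x) < ennreal e" by (elim bexE)
      have dL: "d \<in> L" using d(1) DL by auto
      have gd: "(\<lambda>x. g x - d x) \<in> L1_space L c" by (rule L1_diff[OF g dL])
      have "\<bar>u (\<lambda>x. g x - d x)\<bar> < e" by (rule DB_small[OF u gd d(2)])
      moreover have "\<bar>v (\<lambda>x. g x - d x)\<bar> < e" by (rule DB_small[OF v gd d(2)])
      moreover have "u (\<lambda>x. g x - d x) = u g - u d" by (rule DB_diff[OF u g dL])
      moreover have "v (\<lambda>x. g x - d x) = v g - v d" by (rule DB_diff[OF v g dL])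
      moreover have "u d = v d" using agree d(1) by simp
      ultimately show ?thesis by linarith
    qed
    show ?thesis
    proof (rule ccontr)
      assume "u g \<noteq> v g"
      then have "\<bar>u g - v g\<bar> / 2 > 0" by simp
      from key[OF this] show False by simp
    qed
  qed
qed

lemma main:
  assumes cpt: "compact (UNIV::'a set)" and met: "metrizable_space (euclidean::'a topology)"
  shows "(\<exists>D. countable D \<and> D \<subseteq> L1_space L c \<and>
            (\<forall>g\<in>L1_space L c. \<forall>e>0. \<exists>d\<in>D. cap_ext L c (\<lambda>x. g x - d x) < ennreal e))
       \<and> compact_space (weak_star_ball L c)
       \<and> metrizable_space (weak_star_ball L c)"
proof -
  obtain D where D: "countable D" "D \<subseteq> L"
    "\<forall>g\<in>L1_space L c. \<forall>e>0. \<exists>d\<in>D. cap_ext L c (\<lambda>x. g x - d x) < ennreal e"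
    using L1_sep[OF cpt met] by auto
  have DI: "D \<subseteq> L1_space L c" using D(2) L_in_L1 by auto
  have P1: "\<exists>D. countable D \<and> D \<subseteq> L1_space L c \<and>
            (\<forall>g\<in>L1_space L c. \<forall>e>0. \<exists>d\<in>D. cap_ext L c (\<lambda>x. g x - d x) < ennreal e)"
    using D(1) DI D(3) by (intro exI[of _ D]) simp
  define I where "I = L1_space L c"
  define X where "X = product_topology (\<lambda>_. euclideanreal) I"
  define Bd where "Bd g = enn2real (cap_ext L c g)" for g
  define W where "W = weak_star_ball L c"
  have W: "W = subtopology X (dual_ball L c)" unfolding W_def weak_star_ball_def X_def I_def ..
  have DBX: "dual_ball L c \<subseteq> topspace X" unfolding X_def I_def topspace_prod_ext by (rule DB_ext)
  have tW: "topspace W = dual_ball L c" unfolding W using DBX by auto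
  have K: "compactin X (PiE I (\<lambda>g. {- Bd g .. Bd g}))" unfolding X_def
    by (simp add: compactin_PiE)
  have sub: "dual_ball L c \<subseteq> PiE I (\<lambda>g. {- Bd g .. Bd g})"
  proof
    fix u assume u: "u \<in> dual_ball L c"
    have "u \<in> extensional I" using DB_ext u I_def by auto
    moreover have "u g \<in> {- Bd g .. Bd g}" if "g \<in> I" for g
    proof -
      have "\<bar>u g\<bar> \<le> Bd g" using DB_real_bound[OF u] that I_def Bd_def by simp
      then show ?thesis by (simp add: abs_le_iff)
    qed
    ultimately show "u \<in> PiE I (\<lambda>g. {- Bd g .. Bd g})" by (simp add: PiE_iff)
  qed
  have cl: "closedin X (dual_ball L c)" unfolding X_def I_def by (rule DB_closed)
  have cW: "compact_space W" unfolding W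
    by (rule compact_space_subtopology) (rule closed_compactin[OF K sub cl])
  define Y where "Y = product_topology (\<lambda>_. euclideanreal) D"
  define \<Phi> where "\<Phi> u = restrict u D" for u :: "('a \<Rightarrow> real) \<Rightarrow> real"
  have cont: "continuous_map W Y \<Phi>"
    unfolding Y_def continuous_map_componentwise
  proof (intro conjI ballI)
    show "\<Phi> ` topspace W \<subseteq> extensional D" unfolding \<Phi>_def by auto
    fix k assume k: "k \<in> D"
    have "continuous_map W euclideanreal (\<lambda>u. u k)" unfolding W X_def
      by (rule continuous_map_from_subtopology) (rule proj_cont)
    then show "continuous_map W euclideanreal (\<lambda>x. \<Phi> x k)"
      by (rule continuous_map_eq) (simp add: \<Phi>_def k)
  qed
  have inj: "inj_on \<Phi> (topspace W)"
  proof (rule inj_onI)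
    fix u v assume u: "u \<in> topspace W" and v: "v \<in> topspace W" and e: "\<Phi> u = \<Phi> v"
    have "u d = v d" if "d \<in> D" for d
    proof -
      have "\<Phi> u d = \<Phi> v d" using e by simp
      then show ?thesis using that unfolding \<Phi>_def by simp
    qed
    then show "u = v" using DB_inj[of u v D] u v tW D(2,3) by simp
  qed
  have HY: "Hausdorff_space Y" unfolding Y_def
    by (simp add: Hausdorff_space_product_topology)
  have clm: "closed_map W Y \<Phi>" by (rule continuous_imp_closed_map[OF cont cW HY])
  have emb: "embedding_map W Y \<Phi>" by (rule injective_closed_imp_embedding_map[OF cont clm inj])
  have hom: "W homeomorphic_space subtopology Y (\<Phi> ` topspace W)"
    by (rule embedding_map_imp_homeomorphic_space[OF emb])
  have mY: "metrizable_space Y" unfolding Y_def metrizable_space_product_topology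
  proof (rule disjI2, intro conjI ballI)
    show "countable {i \<in> D. \<not> (\<exists>a. topspace euclideanreal \<subseteq> {a})}"
      by (rule countable_subset[OF _ D(1)]) auto
    show "metrizable_space euclideanreal" if "i \<in> D" for i by (rule metrizable_space_euclidean)
  qed
  have mW: "metrizable_space W"
    using homeomorphic_metrizable_space[OF hom] metrizable_space_subtopology[OF mY] by simp
  show ?thesis using P1 cW mW unfolding W_def by simp
qed

end

theorem proposition2p10:
  fixes L :: "('a::topological_space \<Rightarrow> real) set"
    and c :: "('a \<Rightarrow> real) \<Rightarrow> real"
  assumes "compact (UNIV :: 'a set)"
    and "metrizable_space (euclidean :: 'a topology)"
    and "admissible_lattice L"
    and "capacity L c"
  shows "(\<exists>D. countable D \<and> D \<subseteq> L1_space L c \<and>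
            (\<forall>g\<in>L1_space L c. \<forall>e>0. \<exists>d\<in>D. cap_ext L c (\<lambda>x. g x - d x) < ennreal e))
       \<and> compact_space (weak_star_ball L c)
       \<and> metrizable_space (weak_star_ball L c)"
proof -
  interpret capsetup L c using assms(3,4) by (rule capsetup.intro)
  show ?thesis by (rule main[OF assms(1,2)])
qed


end
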